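(* Let $S$ be a sign string of length $n$ and $J$ a state string such that $(S,J)$ is a dominant lattice path, and let $w^S_J\in\mathrm{Inv}(V^S)$ be the value of the web produced by the growth algorithm from $(S,J)$. Then $$w^S_J=e^S_J+\sum_{J'<J}c(S,J,J')\,e^S_{J'}$$ for some coefficients $c(S,J,J')\in\mathbb{N}[v,v^{-1}]$ (polynomials in $v^{\pm1}$ with nonnegative integer coefficients), where state strings are ordered lexicographically (with $-1<0<1$).
   Context: Let $v$ be an indeterminate, $q^{1/2}=-v$, ground field $\mathbb{C}(v)$. $V^+$ and $V^-$ are the 3-dimensional representations of $U_q(\mathfrak{sl}(3))$ (tensor products via $\bar\Delta(E_i)=E_i\otimes1+K_i^{-1}\otimes E_i$, $\bar\Delta(F_i)=F_i\otimes K_i+1\otimes F_i$, $\bar\Delta(K_i)=K_i\otimes K_i$) with bases $e^\pm_1,e^\pm_0,e^\pm_{-1}$: on $V^+$, $E_1e^+_0=e^+_1$, $F_1e^+_1=e^+_0$, $E_2e^+_{-1}=e^+_0$, $F_2e^+_0=e^+_{-1}$, $K_1=\mathrm{diag}(q^{1/2},q^{-1/2},1)$, $K_2=\mathrm{diag}(1,q^{1/2},q^{-1/2})$ on $(e^+_1,e^+_0,e^+_{-1})$; on $V^-$, $E_1e^-_{-1}=e^-_0$, $F_1e^-_0=e^-_{-1}$, $E_2e^-_0=e^-_1$, $F_2e^-_1=e^-_0$, $K_1=\mathrm{diag}(1,q^{1/2},q^{-1/2})$, $K_2=\mathrm{diag}(q^{1/2},q^{-1/2},1)$ on $(e^-_1,e^-_0,e^-_{-1})$;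 other $E_i,F_i$ on basis vectors are $0$. For $S=(s_1,\dots,s_n)\in\{+,-\}^n$ and $J\in\{-1,0,1\}^n$: $V^S=V^{s_1}\otimes\cdots\otimes V^{s_n}$, $e^S_J=e^{s_1}_{j_1}\otimes\cdots\otimes e^{s_n}_{j_n}$. Dominance: with $\mu^\pm$ fundamental weights, $\alpha_i$ simple roots, $\mathrm{wt}(e^+_1)=\mu^+$, $\mathrm{wt}(e^+_0)=\mu^+-\alpha_1$, $\mathrm{wt}(e^+_{-1})=\mu^+-\alpha_1-\alpha_2$, $\mathrm{wt}(e^-_1)=\mu^-$, $\mathrm{wt}(e^-_0)=\mu^--\alpha_2$, $\mathrm{wt}(e^-_{-1})=\mu^--\alpha_1-\alpha_2$; $(S,J)$ is dominant if the partial sums $\pi_k=\sum_{\ell\le k}\mathrm{wt}(e^{s_\ell}_{j_\ell})$ are nonnegative integral combinations of $\mu^+,\mu^-$ and $\pi_n=0$. Elementary tensors: $b^{+-}=e^+_1\otimes e^-_{-1}+v^{-1}e^+_0\otimes e^-_0+v^{-2}e^+_{-1}\otimes e^-_1$, $b^{-+}$ likewise with signs swapped; $t^{---}=e^-_1\otimes e^-_0\otimes e^-_{-1}+v^{-1}e^-_0\otimes e^-_1\otimes e^-_{-1}+v^{-1}e^-_1\otimes e^-_{-1}\otimes e^-_0+v^{-2}e^-_0\otimes e^-_{-1}\otimes e^-_1+v^{-2}e^-_{-1}\otimes e^-_1\otimes e^-_0+v^{-3}e^-_{-1}\otimes e^-_0\otimes e^-_1$, $t^{+++}$ likewise with $+$;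 $\sigma_{\pm\mp}(e^\pm_{-1}\otimes e^\mp_1)=1$, $\sigma_{\pm\mp}(e^\pm_0\otimes e^\mp_0)=v$, $\sigma_{\pm\mp}(e^\pm_1\otimes e^\mp_{-1})=v^2$, other pairs $0$. Webs and values: a web with boundary $S$ is an oriented graph in the closed lower half-plane with endpoints $1..n$ on $y=0$ left to right, other vertices trivalent sources or sinks, edge at endpoint $k$ pointing toward it iff $s_k=+$. Its value is computed after isotoping so each trivalent vertex has all edges leaving upward, by reading horizontal slices bottom to top (strands labeled $+$ if pointing up, $-$ if down): a cup with legs $(a,b)$ inserts $b^{ab}$, a vertex inserts $t^{+++}$ or $t^{---}$, a cap with legs $(a,b)$ applies $\sigma_{ab}$; this is isotopy invariant. Growth algorithm: starting from $n$ parallel strands with strings $(S,J)$, repeatedly apply to adjacent positions with signs $(s,s')$ and states $(j,j')$ one of: if $s'\ne s$ and $(j,j')\in\{(1,0),(0,0),(0,-1)\}$, attach an "H" (two trivalent vertices joined by a horizontal edge, each joined to its strand above and a new strand below), new signs $(s',s)$, new states $(0,1),(-1,1),(-1,0)$ respectively; if $s'\ne s$ and $(j,j')=(1,-1)$, join by a cup and delete both positions; if $s'=s$ and $(j,j')\in\{(1,0),(0,-1),(1,-1)\}$, join at a trivalent vertex whose third edge continues downward as one position of opposite sign with state $1,-1,0$ respectively. For dominant $(S,J)$ the algorithm ends with empty strings, producing a web with boundary $S$. *)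

theory Defs
  imports "HOL-Library.Poly_Mapping"
begin

type_synonym laurent = "int \<Rightarrow>\<^sub>0 int"

definition vpow :: "int \<Rightarrow> laurent" where
  "vpow k = Poly_Mapping.single k 1"

definition nonneg_coeffs :: "laurent \<Rightarrow> bool" where
  "nonneg_coeffs c \<longleftrightarrow> (\<forall>k. 0 \<le> Poly_Mapping.lookup c k)"

datatype sgn = Pos | Neg

fun neg_sgn :: "sgn \<Rightarrow> sgn" where
  "neg_sgn Pos = Neg" | "neg_sgn Neg = Pos"

(* a vector of V^S is given by its coordinates w.r.t. the basis e^S_J,
   indexed by state strings J (lists over {-1,0,1}) *)
type_synonym tensor = "int list \<Rightarrow> laurent"

definition state_string :: "nat \<Rightarrow> int list \<Rightarrow> bool" where
  "state_string n J \<longleftrightarrow> length J = n \<and> set J \<subseteq> {-1, 0, 1}"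

definition basis_vec :: "int list \<Rightarrow> tensor" where
  "basis_vec J = (\<lambda>K. if K = J then 1 else 0)"

(* b^{ab}: coefficients of e_1 e_{-1}, e_0 e_0, e_{-1} e_1 are 1, v^-1, v^-2
   (the same for b^{+-} and b^{-+}) *)
definition cup_tensor :: "sgn \<Rightarrow> sgn \<Rightarrow> tensor" where
  "cup_tensor a b J =
     (if J = [1, -1] then vpow 0
      else if J = [0, 0] then vpow (-1)
      else if J = [-1, 1] then vpow (-2)
      else 0)"

(* t^{sss} (the same formula for t^{+++} and t^{---}) *)
definition vertex_tensor :: "sgn \<Rightarrow> tensor" where
  "vertex_tensor s J =
     (if J = [1, 0, -1] then vpow 0
      else if J = [0, 1, -1] then vpow (-1)
      else if J = [1, -1, 0] then vpow (-1)
      else if J = [0, -1, 1] then vpow (-2)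
      else if J = [-1, 1, 0] then vpow (-2)
      else if J = [-1, 0, 1] then vpow (-3)
      else 0)"

definition cap_form :: "sgn \<Rightarrow> sgn \<Rightarrow> int \<Rightarrow> int \<Rightarrow> laurent" where
  "cap_form a b j j' =
     (if (j, j') = (-1, 1) then vpow 0
      else if (j, j') = (0, 0) then vpow 1
      else if (j, j') = (1, -1) then vpow 2
      else 0)"

(* insert a k-leg tensor t at positions i..i+k-1 (f (x) t placed at position i) *)
definition ins_at :: "nat \<Rightarrow> nat \<Rightarrow> tensor \<Rightarrow> tensor \<Rightarrow> tensor" where
  "ins_at i k t f = (\<lambda>J. if i + k \<le> length J
       then f (take i J @ drop (i + k) J) * t (take k (drop i J)) else 0)"

definition cap_at :: "nat \<Rightarrow> (int \<Rightarrow> int \<Rightarrow> laurent) \<Rightarrow> tensor \<Rightarrow> tensor" where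
  "cap_at i \<sigma> f = (\<lambda>J. if i \<le> length J
       then (\<Sum>a\<in>{-1, 0, 1}. \<Sum>b\<in>{-1, 0, 1}. \<sigma> a b * f (take i J @ [a, b] @ drop i J))
       else 0)"

(* Y piece: upper strands (s,s) at i,i+1, lower strand of sign -s at i.
   Isotoped: vertex t^{sss} to the right of the lower strand, whose first leg
   is capped with the lower strand. *)
definition Y_map :: "nat \<Rightarrow> sgn \<Rightarrow> tensor \<Rightarrow> tensor" where
  "Y_map i s f = cap_at i (cap_form (neg_sgn s) s) (ins_at (i + 1) 3 (vertex_tensor s) f)"

(* H piece: upper strands (s,s') at i,i+1, lower strands (s',s) at i,i+1, s' = -s.
   Isotoped: left vertex of type s with its first leg capped to the lower-left strand,
   right vertex of type s' with first leg capped to the third leg of the left vertex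
   and third leg capped to the lower-right strand. *)
definition H_map :: "nat \<Rightarrow> sgn \<Rightarrow> sgn \<Rightarrow> tensor \<Rightarrow> tensor" where
  "H_map i s s' f =
     cap_at (i + 2) (cap_form s' s)
      (cap_at (i + 1) (cap_form s s')
        (ins_at (i + 2) 3 (vertex_tensor s')
          (cap_at i (cap_form s' s)
            (ins_at (i + 1) 3 (vertex_tensor s) f))))"

(* grows str w: some complete run of the growth algorithm starting from the
   string str (list of (sign, state)) ends with the empty string and produces
   a web whose value is w.  The value of the web for str is the value of the
   piece attached at the first step, applied to the value of the web grown
   from the new (lower) string. *)
inductive grows :: "(sgn \<times> int) list \<Rightarrow> tensor \<Rightarrow> bool" where
  grow_empty: "grows [] (\<lambda>K. if K = [] then 1 else 0)"
| grow_H: "s' \<noteq> s \<Longrightarrow> (j, j', k, k') \<in> {(1, 0, 0, 1), (0, 0, -1, 1), (0, -1, -1, 0)} \<Longrightarrow>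
    grows (xs @ (s', k) # (s, k') # ys) w \<Longrightarrow>
    grows (xs @ (s, j) # (s', j') # ys) (H_map (length xs) s s' w)"
| grow_cup: "s' \<noteq> s \<Longrightarrow> grows (xs @ ys) w \<Longrightarrow>
    grows (xs @ (s, 1) # (s', -1) # ys) (ins_at (length xs) 2 (cup_tensor s s') w)"
| grow_Y: "(j, j', k) \<in> {(1, 0, 1), (0, -1, -1), (1, -1, 0)} \<Longrightarrow>
    grows (xs @ (neg_sgn s, k) # ys) w \<Longrightarrow>
    grows (xs @ (s, j) # (s, j') # ys) (Y_map (length xs) s w)"

(* weights as coordinates w.r.t. the fundamental weights (mu^+, mu^-) *)
definition mu_plus :: "int \<times> int" where "mu_plus = (1, 0)"
definition mu_minus :: "int \<times> int" where "mu_minus = (0, 1)"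
definition alpha1 :: "int \<times> int" where "alpha1 = (2, -1)"
definition alpha2 :: "int \<times> int" where "alpha2 = (-1, 2)"

definition padd :: "int \<times> int \<Rightarrow> int \<times> int \<Rightarrow> int \<times> int" where
  "padd x y = (fst x + fst y, snd x + snd y)"
definition psub :: "int \<times> int \<Rightarrow> int \<times> int \<Rightarrow> int \<times> int" where
  "psub x y = (fst x - fst y, snd x - snd y)"

fun wt :: "sgn \<Rightarrow> int \<Rightarrow> int \<times> int" where
  "wt Pos j = (if j = 1 then mu_plus
               else if j = 0 then psub mu_plus alpha1
               else psub (psub mu_plus alpha1) alpha2)"
| "wt Neg j = (if j = 1 then mu_minus
               else if j = 0 then psub mu_minus alpha2
               else psub (psub mu_minus alpha1) alpha2)"

definition partial_wt :: "sgn list \<Rightarrow> int list \<Rightarrow> nat \<Rightarrow> int \<times> int" where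
  "partial_wt S J k = foldr padd (map (\<lambda>l. wt (S ! l) (J ! l)) [0..<k]) (0, 0)"

definition dominant :: "sgn list \<Rightarrow> int list \<Rightarrow> bool" where
  "dominant S J \<longleftrightarrow> state_string (length S) J \<and>
     (\<forall>k \<le> length S. 0 \<le> fst (partial_wt S J k) \<and> 0 \<le> snd (partial_wt S J k)) \<and>
     partial_wt S J (length S) = (0, 0)"

definition lex_less :: "int list \<Rightarrow> int list \<Rightarrow> bool" where
  "lex_less J' J \<longleftrightarrow> (J', J) \<in> lexord {(a, b). a < b}"

end

theory Submission
  imports Defs
begin

lemma vpow_mult[simp]: "vpow a * vpow b = vpow (a+b)" unfolding vpow_def by (simp add: mult_single)
lemma vpow_0[simp]: "vpow 0 = 1" unfolding vpow_def
  by (rule poly_mapping_eqI) (simp add: lookup_one lookup_single when_def)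
lemma vpow_nz[simp]: "vpow k \<noteq> 0" unfolding vpow_def by simp

lemma Sum_any_nonneg: "(\<And>x. 0 \<le> g x) \<Longrightarrow> 0 \<le> Sum_any (g::'a\<Rightarrow>int)"
  by (simp add: Sum_any.expand_set sum_nonneg)

lemma nn_mult: assumes "nonneg_coeffs a" "nonneg_coeffs b" shows "nonneg_coeffs (a*b)"
  unfolding nonneg_coeffs_def
proof
  fix k
  have "0 \<le> (\<Sum>l. Poly_Mapping.lookup a l * (\<Sum>q. Poly_Mapping.lookup b q when k = l + q))"
    apply (rule Sum_any_nonneg)
    apply (rule mult_nonneg_nonneg)
    using assms apply (simp add: nonneg_coeffs_def)
    apply (rule Sum_any_nonneg)
    using assms by (simp add: nonneg_coeffs_def when_def)
  then show "0 \<le> Poly_Mapping.lookup (a*b) k" by (simp add: lookup_mult)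
qed

lemma nn_zero: "nonneg_coeffs 0" by (simp add: nonneg_coeffs_def)
lemma nn_one: "nonneg_coeffs 1" by (simp add: nonneg_coeffs_def lookup_one when_def)
lemma nn_add: "nonneg_coeffs a \<Longrightarrow> nonneg_coeffs b \<Longrightarrow> nonneg_coeffs (a+b)"
  by (simp add: nonneg_coeffs_def lookup_add)
lemma nn_vpow: "nonneg_coeffs (vpow k)"
  by (simp add: nonneg_coeffs_def vpow_def lookup_single when_def)
lemma nn_sum: "(\<And>x. x \<in> I \<Longrightarrow> nonneg_coeffs (g x)) \<Longrightarrow> nonneg_coeffs (sum g I)"
  by (induction I rule: infinite_finite_induct) (auto simp: nn_zero nn_add)

section \<open>Sign-independent versions of the pieces\<close>

definition capv :: "int \<Rightarrow> int \<Rightarrow> laurent" where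
  "capv a b = (if (a, b) = (-1, 1) then vpow 0
      else if (a, b) = (0, 0) then vpow 1
      else if (a, b) = (1, -1) then vpow 2 else 0)"

definition vtx :: "int list \<Rightarrow> laurent" where
  "vtx J =
     (if J = [1, 0, -1] then vpow 0
      else if J = [0, 1, -1] then vpow (-1)
      else if J = [1, -1, 0] then vpow (-1)
      else if J = [0, -1, 1] then vpow (-2)
      else if J = [-1, 1, 0] then vpow (-2)
      else if J = [-1, 0, 1] then vpow (-3)
      else 0)"

lemma cap_form_eq: "cap_form x y = capv"
  by (simp add: fun_eq_iff cap_form_def capv_def)
lemma vertex_tensor_eq: "vertex_tensor s = vtx"
  by (simp add: fun_eq_iff vertex_tensor_def vtx_def)

lemma nn_capv: "nonneg_coeffs (capv a b)" by (simp add: capv_def nn_vpow nn_zero nn_one)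
lemma nn_vtx: "nonneg_coeffs (vtx l)" by (simp add: vtx_def nn_vpow nn_zero nn_one)
lemma nn_cup: "nonneg_coeffs (cup_tensor s s' l)" by (simp add: cup_tensor_def nn_vpow nn_zero nn_one)

lemma capv_nz: "capv a b \<noteq> 0 \<Longrightarrow> (a = -1 \<and> b = 1) \<or> (a = 0 \<and> b = 0) \<or> (a = 1 \<and> b = -1)"
  by (auto simp: capv_def split: if_splits)
lemma vtx_nz: "vtx l \<noteq> 0 \<Longrightarrow> l = [1, 0, -1] \<or> l = [0, 1, -1] \<or> l = [1, -1, 0] \<or>
   l = [0, -1, 1] \<or> l = [-1, 1, 0] \<or> l = [-1, 0, 1]"
  by (auto simp: vtx_def split: if_splits)
lemma cup_nz: "cup_tensor s s' l \<noteq> 0 \<Longrightarrow> l = [1, -1] \<or> l = [0, 0] \<or> l = [-1, 1]"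
  by (auto simp: cup_tensor_def split: if_splits)

lemma cap_sum: "(\<Sum>a\<in>{-1,0,1::int}. \<Sum>b\<in>{-1,0,1::int}. capv a b * F a b) =
   (\<Sum>a\<in>{-1,0,1::int}. capv a (-a) * F a (-a))"
  by (simp add: capv_def)

definition le :: "int list \<Rightarrow> int list \<Rightarrow> bool" where
  "le K T \<longleftrightarrow> K = T \<or> lex_less K T"

lemma lex_app: "length u = length w \<Longrightarrow>
  ((u @ v, w @ z) \<in> lexord r) = ((u, w) \<in> lexord r \<or> (u = w \<and> (v, z) \<in> lexord r))"
proof (induction u arbitrary: w)
  case Nil then show ?case by simp
next
  case (Cons a u) then show ?case by (cases w) auto
qed

lemma lex_irrefl[simp]: "\<not> lex_less K K"
  unfolding lex_less_def by (rule lexord_irreflexive) simp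

lemma le_app: assumes "length A = length X" "length D = length D0" "le (A @ D @ B) (X @ D0 @ Y)"
  shows "lex_less A X \<or> (A = X \<and> lex_less D D0) \<or> (A = X \<and> D = D0 \<and> le B Y)"
  using assms unfolding le_def lex_less_def by (auto simp: lex_app)

lemma le_intro: assumes "length A = length X" "length D = length D0"
   "lex_less A X \<or> (A = X \<and> lex_less D D0) \<or> (A = X \<and> D = D0 \<and> le B Y)"
  shows "le (A @ D @ B) (X @ D0 @ Y)"
  using assms unfolding le_def lex_less_def by (auto simp: lex_app)

lemma ins_at_eval: "length A = i \<Longrightarrow> length U = k \<Longrightarrow> ins_at i k t f (A @ U @ B) = f (A @ B) * t U"
  by (simp add: ins_at_def)
lemma ins_at_short: "length K < i + k \<Longrightarrow> ins_at i k t f K = 0"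
  by (simp add: ins_at_def)
lemma cap_at_eval: "length A = i \<Longrightarrow>
  cap_at i \<sigma> f (A @ B) = (\<Sum>a\<in>{-1,0,1}. \<Sum>b\<in>{-1,0,1}. \<sigma> a b * f (A @ [a, b] @ B))"
  by (simp add: cap_at_def)
lemma cap_at_short: "length K < i \<Longrightarrow> cap_at i \<sigma> f K = 0"
  by (simp add: cap_at_def)

section \<open>Invariant and transfer\<close>

definition invp :: "nat \<Rightarrow> int list \<Rightarrow> tensor \<Rightarrow> bool" where
  "invp n T w \<longleftrightarrow> (\<forall>K. nonneg_coeffs (w K)) \<and> w T = 1 \<and>
     (\<forall>K. w K \<noteq> 0 \<longrightarrow> state_string n K \<and> le K T)"

lemma decomp: "i + u \<le> length K \<Longrightarrow> \<exists>A U B. K = A @ U @ B \<and> length A = i \<and> length U = u"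
  apply (rule exI[of _ "take i K"], rule exI[of _ "take u (drop i K)"], rule exI[of _ "drop u (drop i K)"])
  apply (intro conjI)
    apply (simp only: append_take_drop_id)
  by simp_all

lemma sum_nz: "sum g I \<noteq> 0 \<Longrightarrow> \<exists>x\<in>I. g x \<noteq> 0"
  by (meson sum.neutral)

lemma transfer:
  fixes f w' :: tensor and I :: "'i set" and D :: "'i \<Rightarrow> int list" and coef :: "int list \<Rightarrow> 'i \<Rightarrow> laurent"
  assumes invf: "invp m (X @ D0 @ Y) f"
    and lenX: "length X = i" and lenD0: "length D0 = d" and lenU0: "length U0 = u"
    and lenD: "\<And>x. x \<in> I \<Longrightarrow> length (D x) = d"
    and form: "\<And>A U B. length A = i \<Longrightarrow> length U = u \<Longrightarrow> w' (A @ U @ B) = (\<Sum>x\<in>I. coef U x * f (A @ D x @ B))"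
    and short: "\<And>K. length K < i + u \<Longrightarrow> w' K = 0"
    and nn: "\<And>U x. x \<in> I \<Longrightarrow> nonneg_coeffs (coef U x)"
    and sts: "\<And>U x. x \<in> I \<Longrightarrow> length U = u \<Longrightarrow> coef U x \<noteq> 0 \<Longrightarrow> set U \<subseteq> {-1,0,1}"
    and loc: "\<And>U x. x \<in> I \<Longrightarrow> length U = u \<Longrightarrow> coef U x \<noteq> 0 \<Longrightarrow> set (D x) \<subseteq> {-1,0,1} \<Longrightarrow>
          le (D x) D0 \<Longrightarrow> le U U0 \<and> (U = U0 \<longrightarrow> D x = D0)"
    and top: "(\<Sum>x\<in>I. if D x = D0 then coef U0 x else 0) = 1"
    and mn: "m + u = n + d"
  shows "invp n (X @ U0 @ Y) w'"
proof -
  have fnn: "nonneg_coeffs (f K)" for K using invf by (simp add: invp_def)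
  have fT: "f (X @ D0 @ Y) = 1" using invf by (simp add: invp_def)
  have fsup: "f K \<noteq> 0 \<Longrightarrow> state_string m K \<and> le K (X @ D0 @ Y)" for K
    using invf by (simp add: invp_def)
  have part1: "nonneg_coeffs (w' K)" for K
  proof (cases "length K < i + u")
    case True then show ?thesis by (simp add: short nn_zero)
  next
    case False
    then obtain A U B where K: "K = A @ U @ B" "length A = i" "length U = u"
      using decomp[of i u K] by auto
    show ?thesis unfolding K(1) form[OF K(2,3)]
      by (rule nn_sum) (simp add: nn_mult nn fnn)
  qed
  have part2: "w' (X @ U0 @ Y) = 1"
  proof -
    have "w' (X @ U0 @ Y) = (\<Sum>x\<in>I. coef U0 x * f (X @ D x @ Y))"
      using form lenX lenU0 by simp
    also have "\<dots> = (\<Sum>x\<in>I. if D x = D0 then coef U0 x else 0)"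
    proof (rule sum.cong)
      fix x assume x: "x \<in> I"
      show "coef U0 x * f (X @ D x @ Y) = (if D x = D0 then coef U0 x else 0)"
      proof (cases "D x = D0")
        case True then show ?thesis by (simp add: fT)
      next
        case False
        show ?thesis
        proof (rule ccontr)
          assume "coef U0 x * f (X @ D x @ Y) \<noteq> (if D x = D0 then coef U0 x else 0)"
          then have c: "coef U0 x \<noteq> 0" and fx: "f (X @ D x @ Y) \<noteq> 0" using False by auto
          from fsup[OF fx] have ss: "state_string m (X @ D x @ Y)" and l: "le (X @ D x @ Y) (X @ D0 @ Y)" by auto
          have "le (D x) D0" using le_app[OF _ _ l] lenD[OF x] lenD0 by (auto simp: le_def)
          moreover have "set (D x) \<subseteq> {-1,0,1}" using ss by (auto simp: state_string_def)
          ultimately have "D x = D0" using loc[OF x _ c] lenU0 by auto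
          with False show False by simp
        qed
      qed
    qed simp
    finally show ?thesis using top by simp
  qed
  have part3: "state_string n K \<and> le K (X @ U0 @ Y)" if nz: "w' K \<noteq> 0" for K
  proof -
    have "\<not> length K < i + u" using nz short by auto
    then obtain A U B where K: "K = A @ U @ B" "length A = i" "length U = u"
      using decomp[of i u K] by auto
    have "(\<Sum>x\<in>I. coef U x * f (A @ D x @ B)) \<noteq> 0" using nz form[OF K(2,3)] K(1) by simp
    then obtain x where x: "x \<in> I" and t: "coef U x * f (A @ D x @ B) \<noteq> 0"
      using sum_nz by blast
    from t have c: "coef U x \<noteq> 0" and fx: "f (A @ D x @ B) \<noteq> 0" by auto
    from fsup[OF fx] have ss: "state_string m (A @ D x @ B)" and l: "le (A @ D x @ B) (X @ D0 @ Y)" by auto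
    have sD: "set (D x) \<subseteq> {-1,0,1}" using ss by (auto simp: state_string_def)
    have sU: "set U \<subseteq> {-1,0,1}" using sts[OF x K(3) c] .
    have cases: "lex_less A X \<or> (A = X \<and> lex_less (D x) D0) \<or> (A = X \<and> D x = D0 \<and> le B Y)"
      using le_app[OF _ _ l] K(2) lenX lenD[OF x] lenD0 by auto
    have "le K (X @ U0 @ Y)"
    proof -
      have "lex_less A X \<or> (A = X \<and> lex_less U U0) \<or> (A = X \<and> U = U0 \<and> le B Y)"
      proof (cases "lex_less A X")
        case True then show ?thesis by simp
      next
        case False
        with cases have AX: "A = X" and "le (D x) D0" by (auto simp: le_def)
        with loc[OF x K(3) c sD] have lu: "le U U0" and imp: "U = U0 \<longrightarrow> D x = D0" by auto
        show ?thesis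
        proof (cases "U = U0")
          case True
          with imp cases AX have "le B Y" by auto
          with True AX show ?thesis by simp
        next
          case False with lu AX show ?thesis by (simp add: le_def)
        qed
      qed
      then show ?thesis using le_intro[of A X U U0 B Y] K lenX lenU0 by simp
    qed
    moreover have "state_string n K"
      using ss sU K lenD[OF x] mn by (auto simp: state_string_def)
    ultimately show ?thesis by simp
  qed
  show ?thesis unfolding invp_def using part1 part2 part3 by blast
qed

section \<open>The three pieces\<close>

lemma len2: "length U = 2 \<Longrightarrow> \<exists>p y. U = [p, y]"
  by (cases U; cases "tl U") auto

lemma inv_cup:
  assumes invf: "invp m (X @ [] @ Y) f" and lenX: "length X = i"
  shows "invp (m + 2) (X @ [1, -1] @ Y) (ins_at i 2 (cup_tensor s s') f)"
proof (rule transfer[where I = "{()}" and D = "\<lambda>_. []" and coef = "\<lambda>U _. cup_tensor s s' U" and d = 0 and u = 2,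
      OF invf lenX])
  show "\<And>A U B. length A = i \<Longrightarrow> length U = 2 \<Longrightarrow>
      ins_at i 2 (cup_tensor s s') f (A @ U @ B) = (\<Sum>x\<in>{()}. cup_tensor s s' U * f (A @ [] @ B))"
    by (simp add: ins_at_eval mult.commute)
  show "\<And>K. length K < i + 2 \<Longrightarrow> ins_at i 2 (cup_tensor s s') f K = 0" by (rule ins_at_short)
  show "\<And>U x. nonneg_coeffs (cup_tensor s s' U)" by (rule nn_cup)
  show "\<And>U x. length U = 2 \<Longrightarrow> cup_tensor s s' U \<noteq> 0 \<Longrightarrow> set U \<subseteq> {-1,0,1}"
    using cup_nz by fastforce
  show "\<And>U x. length U = 2 \<Longrightarrow> cup_tensor s s' U \<noteq> 0 \<Longrightarrow> set [] \<subseteq> {-1,0,1} \<Longrightarrow>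
          le [] [] \<Longrightarrow> le U [1, -1] \<and> (U = [1, -1] \<longrightarrow> [] = [])"
    using cup_nz by (fastforce simp: le_def lex_less_def)
  show "(\<Sum>x\<in>{()}. if [] = [] then cup_tensor s s' [1, -1] else 0) = 1"
    by (simp add: cup_tensor_def)
qed simp_all

lemma Y_form:
  assumes "length A = i" "length U = 2"
  shows "Y_map i s f (A @ U @ B) = (\<Sum>a\<in>{-1,0,1}. (capv a (-a) * vtx ((-a) # U)) * f (A @ [a] @ B))"
proof -
  have e1: "\<And>a b. ins_at (Suc i) 3 vtx f (A @ a # b # U @ B) = f (A @ a # B) * vtx (b # U)"
    using ins_at_eval[of "A@[_]" "i+1" "_ # U" 3 vtx f B] assms by simp
  have "Y_map i s f (A @ U @ B) = (\<Sum>a\<in>{-1,0,1::int}. \<Sum>b\<in>{-1,0,1::int}. capv a b * (f (A @ a # B) * vtx (b # U)))"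
    unfolding Y_map_def cap_form_eq vertex_tensor_eq
    using assms by (simp add: cap_at_eval e1)
  also have "\<dots> = (\<Sum>a\<in>{-1,0,1::int}. capv a (-a) * (f (A @ a # B) * vtx ((-a) # U)))"
    by (rule cap_sum)
  finally show ?thesis by (simp add: mult_ac)
qed

lemma Y_short: "length K < i + 2 \<Longrightarrow> Y_map i s f K = 0"
  by (simp add: Y_map_def cap_at_def ins_at_def)

lemma inv_Y:
  assumes jk: "(j, j', k) \<in> {(1, 0, 1), (0, -1, -1), (1, -1, 0)}"
    and invf: "invp m (X @ [k] @ Y) f" and lenX: "length X = i"
  shows "invp (m + 1) (X @ [j, j'] @ Y) (Y_map i s f)"
proof (rule transfer[where I = "{-1,0,1}" and D = "\<lambda>a. [a]" and coef = "\<lambda>U a. capv a (-a) * vtx ((-a) # U)"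
      and d = 1 and u = 2, OF invf lenX])
  show "\<And>A U B. length A = i \<Longrightarrow> length U = 2 \<Longrightarrow>
      Y_map i s f (A @ U @ B) = (\<Sum>a\<in>{-1,0,1}. (capv a (-a) * vtx ((-a) # U)) * f (A @ [a] @ B))"
    by (rule Y_form)
  show "\<And>K. length K < i + 2 \<Longrightarrow> Y_map i s f K = 0" by (rule Y_short)
  show "\<And>U x. x \<in> {-1,0,1} \<Longrightarrow> nonneg_coeffs (capv x (-x) * vtx ((-x) # U))"
    by (simp add: nn_mult nn_capv nn_vtx)
  show "\<And>U x. x \<in> {-1,0,1} \<Longrightarrow> length U = 2 \<Longrightarrow> capv x (-x) * vtx ((-x) # U) \<noteq> 0 \<Longrightarrow> set U \<subseteq> {-1,0,1}"
  proof -
    fix U x assume "capv x (-x) * vtx ((-x) # U) \<noteq> 0"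
    then have "vtx ((-x) # U) \<noteq> 0" by auto
    from vtx_nz[OF this] show "set U \<subseteq> {-1,0,1}" by auto
  qed
  show "\<And>U x. x \<in> {-1,0,1} \<Longrightarrow> length U = 2 \<Longrightarrow> capv x (-x) * vtx ((-x) # U) \<noteq> 0 \<Longrightarrow> set [x] \<subseteq> {-1,0,1} \<Longrightarrow>
          le [x] [k] \<Longrightarrow> le U [j, j'] \<and> (U = [j, j'] \<longrightarrow> [x] = [k])"
  proof -
    fix U x assume "capv x (-x) * vtx ((-x) # U) \<noteq> 0" and l: "le [x] [k]"
    then have "vtx ((-x) # U) \<noteq> 0" by auto
    from vtx_nz[OF this] jk l show "le U [j, j'] \<and> (U = [j, j'] \<longrightarrow> [x] = [k])"
      apply -
      apply (elim disjE insertE emptyE)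
      by (simp_all add: le_def lex_less_def)
  qed
  show "(\<Sum>x\<in>{-1,0,1}. if [x] = [k] then capv x (-x) * vtx ((-x) # [j, j']) else 0) = 1"
    using jk apply (elim insertE emptyE)
    by (simp_all add: capv_def vtx_def)
qed simp_all

definition coefH :: "int list \<Rightarrow> int \<times> int \<times> int \<Rightarrow> laurent" where
  "coefH U x = (case x of (a, c, e) \<Rightarrow>
      capv e (-e) * capv c (-c) * capv a (-a) * vtx [-a, U ! 0, c] * vtx [-c, U ! 1, e])"
definition DH :: "int \<times> int \<times> int \<Rightarrow> int list" where
  "DH x = (case x of (a, c, e) \<Rightarrow> [a, -e])"

lemma sum3: "(\<Sum>e\<in>S. \<Sum>c\<in>S. \<Sum>a\<in>S. G a c e) = (\<Sum>x\<in>S \<times> S \<times> S. case x of (a, c, e) \<Rightarrow> G a c e)"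
proof -
  have "(\<Sum>x\<in>S \<times> S \<times> S. case x of (a, c, e) \<Rightarrow> G a c e) = (\<Sum>a\<in>S. \<Sum>y\<in>S \<times> S. case y of (c, e) \<Rightarrow> G a c e)"
    by (simp add: sum.cartesian_product split_def)
  also have "\<dots> = (\<Sum>a\<in>S. \<Sum>c\<in>S. \<Sum>e\<in>S. G a c e)"
    by (simp add: sum.cartesian_product split_def)
  also have "\<dots> = (\<Sum>c\<in>S. \<Sum>a\<in>S. \<Sum>e\<in>S. G a c e)" by (rule sum.swap)
  also have "\<dots> = (\<Sum>c\<in>S. \<Sum>e\<in>S. \<Sum>a\<in>S. G a c e)" by (rule sum.cong[OF refl], rule sum.swap)
  also have "\<dots> = (\<Sum>e\<in>S. \<Sum>c\<in>S. \<Sum>a\<in>S. G a c e)" by (rule sum.swap)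
  finally show ?thesis by simp
qed

lemma H_form:
  assumes A: "length A = i"
  shows "H_map i s s' f (A @ [p, y] @ B) =
     (\<Sum>x\<in>{-1,0,1} \<times> {-1,0,1} \<times> {-1,0,1}. coefH [p, y] x * f (A @ DH x @ B))"
proof -
  define h1 where "h1 = ins_at (i + 1) 3 vtx f"
  define h2 where "h2 = cap_at i capv h1"
  define h3 where "h3 = ins_at (i + 2) 3 vtx h2"
  define h4 where "h4 = cap_at (i + 1) capv h3"
  have H: "H_map i s s' f = cap_at (i + 2) capv h4"
    unfolding H_map_def h1_def h2_def h3_def h4_def cap_form_eq vertex_tensor_eq ..
  have E5: "cap_at (i + 2) capv h4 (A @ p # y # B) =
     (\<Sum>e\<in>{-1,0,1}. \<Sum>g\<in>{-1,0,1}. capv e g * h4 (A @ p # y # e # g # B))"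
    using cap_at_eval[of "A @ [p, y]" "i + 2" capv h4 B] A by simp
  have E4: "h4 (A @ p # y # e # g # B) =
     (\<Sum>c\<in>{-1,0,1}. \<Sum>d\<in>{-1,0,1}. capv c d * h3 (A @ p # c # d # y # e # g # B))" for e g
    using cap_at_eval[of "A @ [p]" "i + 1" capv h3 "y # e # g # B"] A by (simp add: h4_def)
  have E3: "h3 (A @ p # c # d # y # e # g # B) = h2 (A @ p # c # g # B) * vtx [d, y, e]" for c d e g
    using ins_at_eval[of "A @ [p, c]" "i + 2" "[d, y, e]" 3 vtx h2 "g # B"] A by (simp add: h3_def)
  have E2: "h2 (A @ p # c # g # B) =
     (\<Sum>a\<in>{-1,0,1}. \<Sum>b\<in>{-1,0,1}. capv a b * h1 (A @ a # b # p # c # g # B))" for c g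
    using cap_at_eval[of A i capv h1 "p # c # g # B"] A by (simp add: h2_def)
  have E1: "h1 (A @ a # b # p # c # g # B) = f (A @ a # g # B) * vtx [b, p, c]" for a b c g
    using ins_at_eval[of "A @ [a]" "i + 1" "[b, p, c]" 3 vtx f "g # B"] A by (simp add: h1_def)
  have "H_map i s s' f (A @ [p, y] @ B) =
     (\<Sum>e\<in>{-1,0,1}. \<Sum>g\<in>{-1,0,1}. capv e g * (\<Sum>c\<in>{-1,0,1}. \<Sum>d\<in>{-1,0,1}. capv c d *
        ((\<Sum>a\<in>{-1,0,1}. \<Sum>b\<in>{-1,0,1}. capv a b * (f (A @ a # g # B) * vtx [b, p, c])) * vtx [d, y, e])))"
    by (simp only: H E5 E4 E3 E2 E1 append.simps)
  also have "\<dots> = (\<Sum>e\<in>{-1,0,1}. capv e (-e) * (\<Sum>c\<in>{-1,0,1}. capv c (-c) *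
        ((\<Sum>a\<in>{-1,0,1}. capv a (-a) * (f (A @ a # (-e) # B) * vtx [-a, p, c])) * vtx [-c, y, e])))"
    by (simp only: cap_sum)
  also have "\<dots> = (\<Sum>e\<in>{-1,0,1}. \<Sum>c\<in>{-1,0,1}. \<Sum>a\<in>{-1,0,1}. capv e (-e) * (capv c (-c) *
        ((capv a (-a) * (f (A @ a # (-e) # B) * vtx [-a, p, c])) * vtx [-c, y, e])))"
    by (simp only: sum_distrib_left sum_distrib_right)
  also have "\<dots> = (\<Sum>x\<in>{-1,0,1} \<times> {-1,0,1} \<times> {-1,0,1}. case x of (a, c, e) \<Rightarrow> capv e (-e) * (capv c (-c) *
        ((capv a (-a) * (f (A @ a # (-e) # B) * vtx [-a, p, c])) * vtx [-c, y, e])))"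
    by (rule sum3)
  also have "\<dots> = (\<Sum>x\<in>{-1,0,1} \<times> {-1,0,1} \<times> {-1,0,1}. coefH [p, y] x * f (A @ DH x @ B))"
    by (rule sum.cong) (auto simp: coefH_def DH_def mult_ac)
  finally show ?thesis .
qed

lemma H_short: "length K < i + 2 \<Longrightarrow> H_map i s s' f K = 0"
  unfolding H_map_def by (rule cap_at_short) simp

lemma sum3': "(\<Sum>x\<in>S \<times> S \<times> S. F x) = (\<Sum>e\<in>S. \<Sum>c\<in>S. \<Sum>a\<in>S. F (a, c, e))"
  using sum3[of "\<lambda>a c e. F (a, c, e)" S] by (simp add: split_def)

lemma coefH_nz:
  assumes "coefH [p, y] (a, c, e) \<noteq> 0"
  shows "vtx [-a, p, c] \<noteq> 0" "vtx [-c, y, e] \<noteq> 0"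
  using assms by (auto simp: coefH_def)

lemma top_red:
  assumes "k \<in> S" "-k' \<in> S" "finite S"
  shows "(\<Sum>x\<in>S \<times> S \<times> S. if DH x = [k, k'] then g x else 0) = (\<Sum>c\<in>S. g (k, c, -k'))"
proof -
  have "(\<Sum>x\<in>S \<times> S \<times> S. if DH x = [k, k'] then g x else 0) =
     (\<Sum>e\<in>S. \<Sum>c\<in>S. \<Sum>a\<in>S. if a = k then (if e = -k' then g (a, c, e) else 0) else 0)"
    unfolding sum3' by (intro sum.cong refl) (auto simp: DH_def)
  also have "\<dots> = (\<Sum>e\<in>S. \<Sum>c\<in>S. if e = -k' then g (k, c, e) else 0)"
    using assms by simp
  also have "\<dots> = (\<Sum>c\<in>S. \<Sum>e\<in>S. if e = -k' then g (k, c, e) else 0)"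
    by (rule sum.swap)
  also have "\<dots> = (\<Sum>c\<in>S. g (k, c, -k'))"
    using assms by simp
  finally show ?thesis .
qed

lemma top_H:
  assumes "(j, j', k, k') \<in> {(1, 0, 0, 1), (0, 0, -1, 1), (0, -1, -1, 0)}"
  shows "(\<Sum>c\<in>{-1,0,1::int}. coefH [j, j'] (k, c, -k')) = 1"
  using assms apply (elim insertE emptyE)
  by (simp_all add: coefH_def capv_def vtx_def)

lemma inv_H:
  assumes jk: "(j, j', k, k') \<in> {(1, 0, 0, 1), (0, 0, -1, 1), (0, -1, -1, 0)}"
    and invf: "invp m (X @ [k, k'] @ Y) f" and lenX: "length X = i"
  shows "invp m (X @ [j, j'] @ Y) (H_map i s s' f)"
proof (rule transfer[where I = "{-1,0,1} \<times> {-1,0,1} \<times> {-1,0,1}" and D = DH and coef = coefH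
      and d = 2 and u = 2, OF invf lenX])
  show "\<And>A U B. length A = i \<Longrightarrow> length U = 2 \<Longrightarrow>
      H_map i s s' f (A @ U @ B) = (\<Sum>x\<in>{-1,0,1} \<times> {-1,0,1} \<times> {-1,0,1}. coefH U x * f (A @ DH x @ B))"
  proof -
    fix A U B :: "int list" assume "length A = i" "length U = 2"
    then obtain p y where "U = [p, y]" using len2 by blast
    then show "H_map i s s' f (A @ U @ B) = (\<Sum>x\<in>{-1,0,1} \<times> {-1,0,1} \<times> {-1,0,1}. coefH U x * f (A @ DH x @ B))"
      using H_form[OF \<open>length A = i\<close>] by simp
  qed
  show "\<And>K. length K < i + 2 \<Longrightarrow> H_map i s s' f K = 0" by (rule H_short)
  show "\<And>x. x \<in> {-1,0,1} \<times> {-1,0,1} \<times> {-1,0,1} \<Longrightarrow> length (DH x) = 2"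
    by (auto simp: DH_def)
  show "\<And>U x. x \<in> {-1,0,1} \<times> {-1,0,1} \<times> {-1,0,1} \<Longrightarrow> nonneg_coeffs (coefH U x)"
    unfolding coefH_def split_def
    by (intro nn_mult nn_capv nn_vtx)
  show "\<And>U x. x \<in> {-1,0,1} \<times> {-1,0,1} \<times> {-1,0,1} \<Longrightarrow> length U = 2 \<Longrightarrow> coefH U x \<noteq> 0 \<Longrightarrow> set U \<subseteq> {-1,0,1}"
  proof -
    fix U and x :: "int \<times> int \<times> int" assume "length U = 2" "coefH U x \<noteq> 0"
    moreover obtain p y where "U = [p, y]" using len2 \<open>length U = 2\<close> by blast
    moreover obtain a c e where "x = (a, c, e)" by (rule prod_cases3)
    ultimately have "vtx [-a, p, c] \<noteq> 0" "vtx [-c, y, e] \<noteq> 0" using coefH_nz by auto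
    from vtx_nz[OF this(1)] vtx_nz[OF this(2)] have "p \<in> {-1,0,1}" "y \<in> {-1,0,1}" by auto
    then show "set U \<subseteq> {-1,0,1}" using \<open>U = [p, y]\<close> by simp
  qed
  show "\<And>U x. x \<in> {-1,0,1} \<times> {-1,0,1} \<times> {-1,0,1} \<Longrightarrow> length U = 2 \<Longrightarrow> coefH U x \<noteq> 0 \<Longrightarrow>
     set (DH x) \<subseteq> {-1,0,1} \<Longrightarrow> le (DH x) [k, k'] \<Longrightarrow> le U [j, j'] \<and> (U = [j, j'] \<longrightarrow> DH x = [k, k'])"
  proof -
    fix U and x :: "int \<times> int \<times> int" assume lU: "length U = 2" and nz: "coefH U x \<noteq> 0" and l: "le (DH x) [k, k']"
    obtain p y where U: "U = [p, y]" using len2 lU by blast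
    obtain a c e where x: "x = (a, c, e)" by (rule prod_cases3)
    have v1: "vtx [-a, p, c] \<noteq> 0" and v2: "vtx [-c, y, e] \<noteq> 0" using coefH_nz[of p y a c e] nz U x by auto
    have l': "le [a, -e] [k, k']" using l x by (simp add: DH_def)
    have "le [p, y] [j, j'] \<and> ([p, y] = [j, j'] \<longrightarrow> [a, -e] = [k, k'])"
      using vtx_nz[OF v1] vtx_nz[OF v2] jk l'
      apply -
      apply (elim disjE insertE emptyE)
      by (simp_all add: le_def lex_less_def)
    then show "le U [j, j'] \<and> (U = [j, j'] \<longrightarrow> DH x = [k, k'])" using U x by (simp add: DH_def)
  qed
  show "(\<Sum>x\<in>{-1,0,1} \<times> {-1,0,1} \<times> {-1,0,1}. if DH x = [k, k'] then coefH [j, j'] x else 0) = 1"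
  proof -
    have "k \<in> {-1,0,1}" "-k' \<in> {-1,0,1}" using jk by auto
    then have "(\<Sum>x\<in>{-1,0,1} \<times> {-1,0,1} \<times> {-1,0,1}. if DH x = [k, k'] then coefH [j, j'] x else 0)
       = (\<Sum>c\<in>{-1,0,1}. coefH [j, j'] (k, c, -k'))" by (intro top_red) auto
    then show ?thesis using top_H[OF jk] by simp
  qed
qed simp_all

lemma grows_inv: "grows str w \<Longrightarrow> invp (length str) (map snd str) w"
proof (induction rule: grows.induct)
  case grow_empty
  show ?case by (auto simp: invp_def nn_one nn_zero state_string_def le_def)
next
  case (grow_H s' s j j' k k' xs ys w)
  have "invp (length (xs @ (s', k) # (s, k') # ys)) (map snd xs @ [k, k'] @ map snd ys) w"
    using grow_H.IH by simp
  from inv_H[OF grow_H.hyps(2) this, of "length xs" s s'] show ?case by simp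
next
  case (grow_cup s' s xs ys w)
  have "invp (length (xs @ ys)) (map snd xs @ [] @ map snd ys) w"
    using grow_cup.IH by simp
  from inv_cup[OF this, of "length xs" s s'] show ?case by simp
next
  case (grow_Y j j' k xs s ys w)
  have "invp (length (xs @ (neg_sgn s, k) # ys)) (map snd xs @ [k] @ map snd ys) w"
    using grow_Y.IH by simp
  from inv_Y[OF grow_Y.hyps(1) this, of "length xs" s] show ?case by simp
qed

definition nn2 :: "int \<times> int \<Rightarrow> bool" where "nn2 p \<longleftrightarrow> 0 \<le> fst p \<and> 0 \<le> snd p"

fun dfrom :: "int \<times> int \<Rightarrow> (sgn \<times> int) list \<Rightarrow> bool" where
  "dfrom p [] = (p = (0, 0))"
| "dfrom p (x # r) = (snd x \<in> {-1,0,1} \<and> nn2 (padd p (wt (fst x) (snd x))) \<and> dfrom (padd p (wt (fst x) (snd x))) r)"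

fun pre :: "int \<times> int \<Rightarrow> (sgn \<times> int) list \<Rightarrow> bool" where
  "pre p [] = True"
| "pre p (x # r) = (snd x \<in> {-1,0,1} \<and> nn2 (padd p (wt (fst x) (snd x))) \<and> pre (padd p (wt (fst x) (snd x))) r)"

fun psum :: "int \<times> int \<Rightarrow> (sgn \<times> int) list \<Rightarrow> int \<times> int" where
  "psum p [] = p"
| "psum p (x # r) = psum (padd p (wt (fst x) (snd x))) r"

lemma dfrom_append: "dfrom p (xs @ zs) = (pre p xs \<and> dfrom (psum p xs) zs)"
  by (induction xs arbitrary: p) auto

lemma pre_nn: "nn2 p \<Longrightarrow> pre p xs \<Longrightarrow> nn2 (psum p xs)"
  by (induction xs arbitrary: p) auto

lemma wt_vals[simp]: "wt Pos 1 = (1, 0)" "wt Pos 0 = (-1, 1)" "wt Pos (-1) = (0, -1)"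
  "wt Neg 1 = (0, 1)" "wt Neg 0 = (1, -1)" "wt Neg (-1) = (-1, 0)"
  by (simp_all add: mu_plus_def mu_minus_def alpha1_def alpha2_def psub_def)

declare wt.simps[simp del]

lemma padd_simp[simp]: "padd (a, b) (c, d) = (a + c, b + d)" by (simp add: padd_def)

lemma Y_dom:
  assumes "dfrom q ((s, j) # (s, j') # ys)" "(j, j', k) \<in> {(1, 0, 1), (0, -1, -1), (1, -1, 0)}"
  shows "dfrom q ((neg_sgn s, k) # ys)"
proof -
  obtain q1 q2 where q: "q = (q1, q2)" by (cases q)
  show ?thesis using assms unfolding q
    apply (cases s; elim insertE emptyE)
    by (simp_all add: nn2_def)
qed

lemma cup_dom:
  assumes "dfrom q ((s, 1) # (s', -1) # ys)" "s' \<noteq> s"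
  shows "dfrom q ys"
proof -
  obtain q1 q2 where q: "q = (q1, q2)" by (cases q)
  show ?thesis using assms unfolding q
    apply (cases s; cases s')
    by (simp_all add: nn2_def)
qed

lemma H_dom:
  assumes "nn2 q" "dfrom q ((s, j) # (s', j') # ys)" "s' \<noteq> s"
    "(j, j', k, k') \<in> {(1, 0, 0, 1), (0, -1, -1, 0)}"
  shows "dfrom q ((s', k) # (s, k') # ys)"
proof -
  obtain q1 q2 where q: "q = (q1, q2)" by (cases q)
  show ?thesis using assms unfolding q
    apply (cases s; cases s'; elim insertE emptyE)
    by (simp_all add: nn2_def)
qed

fun mu :: "(sgn \<times> int) list \<Rightarrow> nat" where
  "mu [] = 0"
| "mu (x # r) = nat (snd x + 1) * Suc (length r) + mu r"

lemma mu_app: "length zs = length zs' \<Longrightarrow> mu zs' < mu zs \<Longrightarrow> mu (xs @ zs') < mu (xs @ zs)"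
  by (induction xs) auto

lemma descent: "(xs :: ('a \<times> int) list) \<noteq> [] \<Longrightarrow> 1 \<le> snd (hd xs) \<Longrightarrow> snd (last xs) \<le> -1 \<Longrightarrow>
   \<exists>as a b bs. xs = as @ a # b # bs \<and> snd b < snd a"
proof (induction xs)
  case Nil thus ?case by simp
next
  case (Cons x r)
  show ?case
  proof (cases r)
    case Nil with Cons.prems have "1 \<le> snd x" "snd x \<le> -1" by auto
    then have False by linarith
    then show ?thesis ..
  next
    case (Cons y r')
    note r = this
    show ?thesis
    proof (cases "snd y < snd x")
      case True then show ?thesis using r by (intro exI[of _ "[]"]) auto
    next
      case False
      then have "1 \<le> snd (hd r)" "snd (last r) \<le> -1" using Cons.prems r by auto
      with Cons.IH r obtain as a b bs where "r = as @ a # b # bs" "snd b < snd a" by auto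
      then show ?thesis by (intro exI[of _ "x # as"]) auto
    qed
  qed
qed

lemma hd_one: "str \<noteq> [] \<Longrightarrow> dfrom (0, 0) str \<Longrightarrow> 1 \<le> snd (hd str)"
proof (cases str)
  case (Cons x r)
  assume "dfrom (0, 0) str"
  then have "snd x \<in> {-1,0,1}" "nn2 (wt (fst x) (snd x))" using Cons by (auto simp: padd_def)
  then show ?thesis using Cons by (cases "fst x") (auto simp: nn2_def)
qed simp

lemma last_m1: "str \<noteq> [] \<Longrightarrow> dfrom (0, 0) str \<Longrightarrow> snd (last str) \<le> -1"
proof -
  assume ne: "str \<noteq> []" and d: "dfrom (0, 0) str"
  obtain xs x where str: "str = xs @ [x]" using ne by (metis append_butlast_last_id)
  have "pre (0, 0) xs" and d1: "dfrom (psum (0, 0) xs) [x]" using d str dfrom_append by auto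
  then have nq: "nn2 (psum (0, 0) xs)" using pre_nn by (simp add: nn2_def)
  obtain q1 q2 where q: "psum (0, 0) xs = (q1, q2)" by (cases "psum (0, 0) xs")
  obtain s j where x: "x = (s, j)" by (cases x)
  have "j \<in> {-1,0,1}" "padd (q1, q2) (wt s j) = (0, 0)" using d1 q x by auto
  then show ?thesis using nq q x str by (cases s) (auto simp: nn2_def)
qed

lemma ex_grows: "length str = n \<Longrightarrow> dfrom (0, 0) str \<Longrightarrow> \<exists>w. grows str w"
proof (induction n arbitrary: str rule: less_induct)
  case (less n)
  note outerIH = less.IH
  have main: "\<forall>str. length str = n \<longrightarrow> mu str = m \<longrightarrow> dfrom (0, 0) str \<longrightarrow> (\<exists>w. grows str w)" for m
  proof (induction m rule: less_induct)
    case (less m)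
    note innerIH = less.IH
    show ?case
    proof (intro allI impI)
      fix str assume len: "length str = n" and mu: "mu str = m" and d: "dfrom (0, 0) str"
      show "\<exists>w. grows str w"
      proof (cases "str = []")
        case True then show ?thesis using grow_empty by blast
      next
        case False
        obtain xs a b ys where str: "str = xs @ a # b # ys" and ab: "snd b < snd a"
          using descent[OF False hd_one[OF False d] last_m1[OF False d]] by blast
        obtain s j where a: "a = (s, j)" by (cases a)
        obtain s' j' where b: "b = (s', j')" by (cases b)
        define q where "q = psum (0, 0) xs"
        have d': "dfrom (0, 0) (xs @ (s, j) # (s', j') # ys)" using d str a b by simp
        have pre: "pre (0, 0) xs" and dq: "dfrom q ((s, j) # (s', j') # ys)"
          using d' unfolding dfrom_append q_def by simp_all
        have nq: "nn2 q" using pre_nn[OF _ pre] unfolding q_def by (simp add: nn2_def)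
        have jr: "j \<in> {-1,0,1}" "j' \<in> {-1,0,1}" using dq by auto
        have jab: "j' < j" using ab a b by simp
        have bk: "\<And>zs. dfrom q zs \<Longrightarrow> dfrom (0, 0) (xs @ zs)"
          using pre unfolding dfrom_append q_def by simp
        show ?thesis
        proof (cases "s' = s")
          case True
          define k where "k = (if j = 1 \<and> j' = 0 then 1 else if j = 0 \<and> j' = -1 then -1 else (0::int))"
          have jk: "(j, j', k) \<in> {(1, 0, 1), (0, -1, -1), (1, -1, 0)}" using jr jab unfolding k_def by auto
          have "dfrom q ((s, j) # (s, j') # ys)" using dq True by simp
          from Y_dom[OF this jk] have "dfrom q ((neg_sgn s, k) # ys)" .
          then have d2: "dfrom (0, 0) (xs @ (neg_sgn s, k) # ys)" by (rule bk)
          have l2: "length (xs @ (neg_sgn s, k) # ys) < n" using len str by simp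
          obtain w where "grows (xs @ (neg_sgn s, k) # ys) w" using outerIH[OF l2 refl d2] by blast
          then have "grows (xs @ (s, j) # (s, j') # ys) (Y_map (length xs) s w)" by (rule grow_Y[OF jk])
          then show ?thesis using str a b True by auto
        next
          case False
          consider "j = 1 \<and> j' = -1" | "j = 1 \<and> j' = 0" | "j = 0 \<and> j' = -1" using jr jab by auto
          then show ?thesis
          proof cases
            case 1
            have "dfrom q ((s, 1) # (s', -1) # ys)" using dq 1 by simp
            from cup_dom[OF this False] have "dfrom q ys" .
            then have d2: "dfrom (0, 0) (xs @ ys)" by (rule bk)
            have l2: "length (xs @ ys) < n" using len str by simp
            obtain w where "grows (xs @ ys) w" using outerIH[OF l2 refl d2] by blast
            then have "grows (xs @ (s, 1) # (s', -1) # ys) (ins_at (length xs) 2 (cup_tensor s s') w)"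
              by (rule grow_cup[OF False])
            then show ?thesis using str a b 1 by auto
          next
            case 2
            have jk: "(j, j', 0, 1) \<in> {(1, 0, 0, 1), (0, -1, -1, 0)}" using 2 by simp
            have "dfrom q ((s', 0) # (s, 1) # ys)" using H_dom[OF nq dq False jk] .
            then have d2: "dfrom (0, 0) (xs @ (s', 0) # (s, 1) # ys)" by (rule bk)
            have l2: "length (xs @ (s', 0) # (s, 1) # ys) = n" using len str by simp
            have "mu ((s', 0) # (s, 1) # ys) < mu ((s, j) # (s', j') # ys)" using 2 by simp
            then have m2: "mu (xs @ (s', 0) # (s, 1) # ys) < m" using mu str a b
              using mu_app[of "(s, j) # (s', j') # ys" "(s', 0) # (s, 1) # ys" xs] by simp
            have "\<exists>w. grows (xs @ (s', 0) # (s, 1) # ys) w"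
              using innerIH[OF m2] l2 d2 by blast
            then obtain w where gw: "grows (xs @ (s', 0) # (s, 1) # ys) w" by blast
            have "grows (xs @ (s, j) # (s', j') # ys) (H_map (length xs) s s' w)"
              using grow_H[OF False _ gw, of j j'] 2 by simp
            then show ?thesis using str a b by auto
          next
            case 3
            have jk: "(j, j', -1, 0) \<in> {(1, 0, 0, 1), (0, -1, -1, 0)}" using 3 by simp
            have "dfrom q ((s', -1) # (s, 0) # ys)" using H_dom[OF nq dq False jk] .
            then have d2: "dfrom (0, 0) (xs @ (s', -1) # (s, 0) # ys)" by (rule bk)
            have l2: "length (xs @ (s', -1) # (s, 0) # ys) = n" using len str by simp
            have "mu ((s', -1) # (s, 0) # ys) < mu ((s, j) # (s', j') # ys)" using 3 by simp
            then have m2: "mu (xs @ (s', -1) # (s, 0) # ys) < m" using mu str a b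
              using mu_app[of "(s, j) # (s', j') # ys" "(s', -1) # (s, 0) # ys" xs] by simp
            have "\<exists>w. grows (xs @ (s', -1) # (s, 0) # ys) w"
              using innerIH[OF m2] l2 d2 by blast
            then obtain w where gw: "grows (xs @ (s', -1) # (s, 0) # ys) w" by blast
            have "grows (xs @ (s, j) # (s', j') # ys) (H_map (length xs) s s' w)"
              using grow_H[OF False _ gw, of j j'] 3 by simp
            then show ?thesis using str a b by auto
          qed
        qed
      qed
    qed
  qed
  then show ?case using less.prems by blast
qed

lemma padd_foldr: "foldr padd xs z = (sum_list (map fst xs) + fst z, sum_list (map snd xs) + snd z)"
  by (induction xs arbitrary: z) (auto simp: padd_def)

lemma pw_Suc: "partial_wt S J (Suc k) = padd (partial_wt S J k) (wt (S ! k) (J ! k))"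
  unfolding partial_wt_def padd_foldr by (simp add: padd_def)

lemma pw_0: "partial_wt S J 0 = (0, 0)" by (simp add: partial_wt_def)

lemma dom_dfrom: assumes dom: "dominant S J" shows "dfrom (0, 0) (zip S J)"
proof -
  have len: "length J = length S" and st: "set J \<subseteq> {-1,0,1}"
    using dom by (auto simp: dominant_def state_string_def)
  have nnk: "\<And>k. k \<le> length S \<Longrightarrow> nn2 (partial_wt S J k)"
    using dom by (auto simp: dominant_def nn2_def)
  have "k \<le> length S \<Longrightarrow> dfrom (partial_wt S J k) (drop k (zip S J))" for k
  proof (induction "length S - k" arbitrary: k)
    case 0
    then have "k = length S" by simp
    then show ?case using dom len by (simp add: dominant_def)
  next
    case (Suc t)
    then have kl: "k < length S" by simp
    have dz: "drop k (zip S J) = (S ! k, J ! k) # drop (Suc k) (zip S J)"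
      using Cons_nth_drop_Suc[of k "zip S J"] kl len by simp
    have IH: "dfrom (partial_wt S J (Suc k)) (drop (Suc k) (zip S J))"
      using Suc.hyps(1)[of "Suc k"] Suc.hyps(2) kl by simp
    have "J ! k \<in> set J" using kl len by simp
    then have jk: "J ! k \<in> {-1,0,1}" using st by blast
    have "nn2 (partial_wt S J (Suc k))" using nnk kl by simp
    then show ?case using dz IH jk by (simp add: pw_Suc)
  qed
  from this[of 0] show ?thesis by (simp add: pw_0)
qed

theorem theorem6:
  fixes S :: "sgn list" and J :: "int list"
  assumes "dominant S J"
  shows "(\<exists>w. grows (zip S J) w) \<and>
         (\<forall>w. grows (zip S J) w \<longrightarrow>
            (\<exists>c :: int list \<Rightarrow> laurent.
               (\<forall>J'. nonneg_coeffs (c J')) \<and>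
               (\<forall>K. w K = basis_vec J K +
                   (\<Sum>J'\<in>{J'. state_string (length S) J' \<and> lex_less J' J}. c J' * basis_vec J' K))))"
proof
  have len: "length J = length S" using assms by (simp add: dominant_def state_string_def)
  show "\<exists>w. grows (zip S J) w" using ex_grows[OF refl dom_dfrom[OF assms]] by blast
  show "\<forall>w. grows (zip S J) w \<longrightarrow>
            (\<exists>c :: int list \<Rightarrow> laurent.
               (\<forall>J'. nonneg_coeffs (c J')) \<and>
               (\<forall>K. w K = basis_vec J K +
                   (\<Sum>J'\<in>{J'. state_string (length S) J' \<and> lex_less J' J}. c J' * basis_vec J' K)))"
  proof (intro allI impI)
    fix w assume g: "grows (zip S J) w"
    have inv: "invp (length S) J w" using grows_inv[OF g] len by simp
    define F where "F = {J'. state_string (length S) J' \<and> lex_less J' J}"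
    have "F \<subseteq> {xs. set xs \<subseteq> {-1,0,1} \<and> length xs = length S}"
      by (auto simp: F_def state_string_def)
    then have finF: "finite F"
      by (rule finite_subset) (rule finite_lists_length_eq, simp)
    have sumF: "(\<Sum>J'\<in>F. w J' * basis_vec J' K) = (if K \<in> F then w K else 0)" for K
    proof -
      have "(\<Sum>J'\<in>F. w J' * basis_vec J' K) = (\<Sum>J'\<in>F. if K = J' then w J' else 0)"
        by (rule sum.cong) (auto simp: basis_vec_def)
      also have "\<dots> = (if K \<in> F then w K else 0)" using finF by simp
      finally show ?thesis .
    qed
    have "\<forall>K. w K = basis_vec J K + (\<Sum>J'\<in>F. w J' * basis_vec J' K)"
    proof
      fix K
      show "w K = basis_vec J K + (\<Sum>J'\<in>F. w J' * basis_vec J' K)"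
      proof (cases "K = J")
        case True
        have "J \<notin> F" by (simp add: F_def)
        then show ?thesis using True inv sumF by (simp add: invp_def basis_vec_def)
      next
        case False
        show ?thesis
        proof (cases "w K = 0")
          case True
          then show ?thesis using False sumF by (simp add: basis_vec_def)
        next
          case nz: False
          then have "K \<in> F" using inv False by (auto simp: invp_def le_def F_def)
          then show ?thesis using False sumF by (simp add: basis_vec_def)
        qed
      qed
    qed
    moreover have "\<forall>J'. nonneg_coeffs (w J')" using inv by (simp add: invp_def)
    ultimately show "\<exists>c :: int list \<Rightarrow> laurent.
               (\<forall>J'. nonneg_coeffs (c J')) \<and>
               (\<forall>K. w K = basis_vec J K +
                   (\<Sum>J'\<in>{J'. state_string (length S) J' \<and> lex_less J' J}. c J' * basis_vec J' K))"
      unfolding F_def by blast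
  qed
qed

end
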